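(* Let $f:S^2\to\mathbb{R}^3$ be a strictly convex embedding of the $2$-sphere, and let $\tilde\xi:S^2\to\mathbb{R}^3$ be its Blaschke normal map. Then $\tilde\xi$ is a wave front: there is a map $\nu:S^2\to(\mathbb{R}^3)^*$ such that $p\mapsto(\tilde\xi_p,[\nu_p])$ is a Legendrian immersion of $S^2$ into the projective cotangent bundle $P(T^*\mathbb{R}^3)=\mathbb{R}^3\times P((\mathbb{R}^3)^* )$ (with its canonical contact structure), whose projection to $\mathbb{R}^3$ is $\tilde\xi$.
   Context: For a strictly convex embedding $f$, affine differential geometry provides a transversal vector field $\xi$ along $f$ (the affine normal), a torsion free connection $\nabla$ on $S^2$, a bundle homomorphism $\alpha:TS^2\to TS^2$ (affine shape operator) and a positive definite symmetric tensor $h$ such that $D_X df(Y)=df(\nabla_XY)+h(X,Y)\xi$ and $D_X\xi=-df(\alpha(X))$ for all vector fields $X,Y$, where $D$ is the standard flat connection of $\mathbb{R}^3$; this structure is unique up to multiplication of $\xi$ by a nonzero constant. The Blaschke normal map is the map $\tilde\xi:S^2\to\mathbb{R}^3$ induced by $\xi$ (identifying vectors of $\mathbb{R}^3$ with points). *)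

theory Defs
  imports "HOL-Analysis.Analysis"
begin

definition S2 :: "(real^3) set" where
  "S2 = sphere 0 1"

definition TS2 :: "real^3 \<Rightarrow> (real^3) set" where
  "TS2 p = {v. v \<bullet> p = 0}"

text \<open>Degree-0 homogeneous extension of a map defined on S2 to R^3 minus 0.\<close>
definition hext :: "(real^3 \<Rightarrow> 'b) \<Rightarrow> real^3 \<Rightarrow> 'b" where
  "hext f x = f (scaleR (1 / norm x) x)"

fun Ck_on :: "nat \<Rightarrow> 'a::real_normed_vector set \<Rightarrow> ('a \<Rightarrow> 'b::real_normed_vector) \<Rightarrow> bool" where
  "Ck_on 0 U f = continuous_on U f"
| "Ck_on (Suc k) U f =
     ((\<forall>x\<in>U. f differentiable (at x)) \<and>
      (\<forall>v. Ck_on k U (\<lambda>x. frechet_derivative f (at x) v)))"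

definition Cinf_on :: "'a::real_normed_vector set \<Rightarrow> ('a \<Rightarrow> 'b::real_normed_vector) \<Rightarrow> bool" where
  "Cinf_on U f = (\<forall>k. Ck_on k U f)"

definition smooth_S2 :: "(real^3 \<Rightarrow> 'b::real_normed_vector) \<Rightarrow> bool" where
  "smooth_S2 f = Cinf_on (- {0}) (hext f)"

definition dS2 :: "(real^3 \<Rightarrow> 'b::real_normed_vector) \<Rightarrow> real^3 \<Rightarrow> real^3 \<Rightarrow> 'b" where
  "dS2 f p v = frechet_derivative (hext f) (at p) v"

text \<open>Second derivative of the homogeneous extension (= second derivative along great circles).\<close>
definition d2S2 :: "(real^3 \<Rightarrow> 'b::real_normed_vector) \<Rightarrow> real^3 \<Rightarrow> real^3 \<Rightarrow> real^3 \<Rightarrow> 'b" where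
  "d2S2 f p u v = frechet_derivative (\<lambda>q. frechet_derivative (hext f) (at q) u) (at p) v"

definition vfield :: "(real^3 \<Rightarrow> real^3) \<Rightarrow> bool" where
  "vfield X = (smooth_S2 X \<and> (\<forall>p\<in>S2. X p \<in> TS2 p))"

definition bracket :: "(real^3 \<Rightarrow> real^3) \<Rightarrow> (real^3 \<Rightarrow> real^3) \<Rightarrow> real^3 \<Rightarrow> real^3" where
  "bracket X Y p = dS2 Y p (X p) - dS2 X p (Y p)"

definition immersion_S2 :: "(real^3 \<Rightarrow> real^3) \<Rightarrow> bool" where
  "immersion_S2 f = (\<forall>p\<in>S2. \<forall>v\<in>TS2 p. dS2 f p v = 0 \<longrightarrow> v = 0)"

text \<open>Strictly convex: smooth embedding whose second fundamental form is definite everywhere.\<close>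
definition strictly_convex_embedding :: "(real^3 \<Rightarrow> real^3) \<Rightarrow> bool" where
  "strictly_convex_embedding f =
     (smooth_S2 f \<and> inj_on f S2 \<and> immersion_S2 f \<and>
      (\<forall>p\<in>S2. \<exists>l::real^3. (\<forall>v\<in>TS2 p. l \<bullet> dS2 f p v = 0) \<and>
              (\<forall>v\<in>TS2 p. v \<noteq> 0 \<longrightarrow> l \<bullet> d2S2 f p v v > 0)))"

definition torsion_free_connection ::
  "((real^3 \<Rightarrow> real^3) \<Rightarrow> (real^3 \<Rightarrow> real^3) \<Rightarrow> real^3 \<Rightarrow> real^3) \<Rightarrow> bool" where
  "torsion_free_connection nabla =
     (\<forall>X Y Z. vfield X \<longrightarrow> vfield Y \<longrightarrow> vfield Z \<longrightarrow>
        vfield (nabla X Y) \<and>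
        (\<forall>p\<in>S2. nabla (\<lambda>q. X q + Z q) Y p = nabla X Y p + nabla Z Y p) \<and>
        (\<forall>p\<in>S2. nabla X (\<lambda>q. Y q + Z q) p = nabla X Y p + nabla X Z p) \<and>
        (\<forall>phi :: real^3 \<Rightarrow> real. smooth_S2 phi \<longrightarrow>
           (\<forall>p\<in>S2. nabla (\<lambda>q. phi q *\<^sub>R X q) Y p = phi p *\<^sub>R nabla X Y p) \<and>
           (\<forall>p\<in>S2. nabla X (\<lambda>q. phi q *\<^sub>R Y q) p =
                      dS2 phi p (X p) *\<^sub>R Y p + phi p *\<^sub>R nabla X Y p)) \<and>
        (\<forall>p\<in>S2. nabla X Y p - nabla Y X p = bracket X Y p))"

definition bundle_endo :: "(real^3 \<Rightarrow> real^3 \<Rightarrow> real^3) \<Rightarrow> bool" where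
  "bundle_endo alpha =
     ((\<forall>p\<in>S2. linear (alpha p) \<and> alpha p ` TS2 p \<subseteq> TS2 p) \<and>
      (\<forall>X. vfield X \<longrightarrow> vfield (\<lambda>p. alpha p (X p))))"

definition pos_def_sym_tensor :: "(real^3 \<Rightarrow> real^3 \<Rightarrow> real^3 \<Rightarrow> real) \<Rightarrow> bool" where
  "pos_def_sym_tensor h =
     ((\<forall>p\<in>S2. bilinear (h p) \<and>
         (\<forall>u\<in>TS2 p. \<forall>v\<in>TS2 p. h p u v = h p v u) \<and>
         (\<forall>u\<in>TS2 p. u \<noteq> 0 \<longrightarrow> h p u u > 0)) \<and>
      (\<forall>X Y. vfield X \<longrightarrow> vfield Y \<longrightarrow> smooth_S2 (\<lambda>p. h p (X p) (Y p))))"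

definition det3 :: "real^3 \<Rightarrow> real^3 \<Rightarrow> real^3 \<Rightarrow> real" where
  "det3 a b c = det (vector [a, b, c] :: real^3^3)"

text \<open>xi is an affine (Blaschke) normal field of f: a transversal field with
  the structure equations of affine differential geometry, and the Blaschke
  normalisation (induced volume = constant multiple of the volume of h).\<close>
definition blaschke_normal :: "(real^3 \<Rightarrow> real^3) \<Rightarrow> (real^3 \<Rightarrow> real^3) \<Rightarrow> bool" where
  "blaschke_normal f xi =
     (smooth_S2 xi \<and>
      (\<forall>p\<in>S2. xi p \<notin> dS2 f p ` TS2 p) \<and>
      (\<exists>nabla alpha h.
         torsion_free_connection nabla \<and> bundle_endo alpha \<and> pos_def_sym_tensor h \<and>
         (\<forall>X Y. vfield X \<longrightarrow> vfield Y \<longrightarrow> (\<forall>p\<in>S2.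
             dS2 (\<lambda>q. dS2 f q (Y q)) p (X p) =
               dS2 f p (nabla X Y p) + h p (X p) (Y p) *\<^sub>R xi p)) \<and>
         (\<forall>X. vfield X \<longrightarrow> (\<forall>p\<in>S2. dS2 xi p (X p) = - dS2 f p (alpha p (X p)))) \<and>
         (\<exists>k>0. \<forall>p\<in>S2. \<forall>u\<in>TS2 p. \<forall>v\<in>TS2 p.
             (det3 (dS2 f p u) (dS2 f p v) (xi p))\<^sup>2 =
               k * (h p u u * h p v v - (h p u v)\<^sup>2))))"

text \<open>x is a wave front in R^3: there is a smooth nowhere vanishing covector field nu
  (covectors identified with vectors via the inner product) such that
  p \<mapsto> (x p, [nu p]) into R^3 \<times> P((R^3)^*) is a Legendrian immersion:
  it is isotropic for the canonical contact structure (nu(dx) = 0), and its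
  differential is injective (dx v = 0 and d nu v \<in> span (nu p) imply v = 0).\<close>
definition wave_front :: "(real^3 \<Rightarrow> real^3) \<Rightarrow> bool" where
  "wave_front x =
     (\<exists>nu :: real^3 \<Rightarrow> real^3.
        smooth_S2 nu \<and> (\<forall>p\<in>S2. nu p \<noteq> 0) \<and>
        (\<forall>p\<in>S2. \<forall>v\<in>TS2 p. nu p \<bullet> dS2 x p v = 0) \<and>
        (\<forall>p\<in>S2. \<forall>v\<in>TS2 p.
            dS2 x p v = 0 \<and> (\<exists>c. dS2 nu p v = c *\<^sub>R nu p) \<longrightarrow> v = 0))"

end

theory Submission
  imports Defs "HOL-Analysis.Cross3"
begin

unbundle cross3_syntax


lemma Ck_on_diff: "Ck_on (Suc k) U f \<Longrightarrow> x \<in> U \<Longrightarrow> (f has_derivative frechet_derivative f (at x)) (at x)"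
  using frechet_derivative_works by auto

lemma Ck_on_mono: "Ck_on (Suc k) U f \<Longrightarrow> Ck_on k U f"
proof (induction k arbitrary: f)
  case 0
  then show ?case
    by (auto intro!: continuous_at_imp_continuous_on differentiable_imp_continuous_within)
next
  case (Suc k)
  then show ?case by auto
qed

lemma Ck_on_cong:
  assumes "open U" "\<And>x. x \<in> U \<Longrightarrow> f x = g x" "Ck_on k U f"
  shows "Ck_on k U g"
  using assms
proof (induction k arbitrary: f g)
  case 0
  then show ?case using continuous_on_cong by force
next
  case (Suc k)
  have d: "(g has_derivative frechet_derivative f (at x)) (at x)" if "x \<in> U" for x
    using has_derivative_transform_within_open[OF Ck_on_diff[OF Suc.prems(3) that] Suc.prems(1) that Suc.prems(2)]
    by simp
  have e: "frechet_derivative g (at x) = frechet_derivative f (at x)" if "x \<in> U" for x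
    using frechet_derivative_at[OF d[OF that]] by simp
  show ?case
  proof (simp, intro conjI allI ballI)
    fix x assume "x \<in> U" then show "g differentiable at x" using d differentiable_def by blast
  next
    fix v
    show "Ck_on k U (\<lambda>x. frechet_derivative g (at x) v)"
      using Suc.IH[of "\<lambda>x. frechet_derivative f (at x) v"] Suc.prems e by auto
  qed
qed

lemma Ck_on_const: "Ck_on k U (\<lambda>x. c)"
proof (induction k arbitrary: c)
  case 0 then show ?case by simp
next
  case (Suc k)
  have "frechet_derivative (\<lambda>x. c) (at x) = (\<lambda>h. 0)" for x
    by (metis frechet_derivative_at has_derivative_const)
  then show ?case using Suc by simp
qed

lemma Ck_on_linear: "bounded_linear L \<Longrightarrow> Ck_on k U L"
proof (cases k)
  case 0 assume "bounded_linear L" then show ?thesis using 0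
    by (simp add: linear_continuous_on)
next
  case (Suc m) assume L: "bounded_linear L"
  have "frechet_derivative L (at x) = L" for x
    by (metis L frechet_derivative_at bounded_linear_imp_has_derivative)
  then show ?thesis using Suc L Ck_on_const
    by (auto simp: bounded_linear_imp_differentiable)
qed

lemma Ck_on_add:
  assumes "open U" shows "Ck_on k U f \<Longrightarrow> Ck_on k U g \<Longrightarrow> Ck_on k U (\<lambda>x. f x + g x)"
proof (induction k arbitrary: f g)
  case 0 then show ?case by (simp add: continuous_on_add)
next
  case (Suc k)
  have e: "frechet_derivative (\<lambda>x. f x + g x) (at x) = (\<lambda>h. frechet_derivative f (at x) h + frechet_derivative g (at x) h)"
    if "x \<in> U" for x
    by (metis (no_types) frechet_derivative_at has_derivative_add Ck_on_diff Suc.prems that)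
  show ?case
  proof (simp, intro conjI allI ballI)
    fix x assume "x \<in> U" then show "(\<lambda>x. f x + g x) differentiable at x" using Suc.prems by auto
  next
    fix v
    have "Ck_on k U (\<lambda>x. frechet_derivative f (at x) v + frechet_derivative g (at x) v)"
      using Suc.prems by (intro Suc.IH) auto
    note X = this show "Ck_on k U (\<lambda>x. frechet_derivative (\<lambda>x. f x + g x) (at x) v)"
      by (rule Ck_on_cong[OF assms _ X]) (simp add: e)
  qed
qed

lemma Ck_on_bilinear:
  assumes "open U" "bounded_bilinear pr"
  shows "Ck_on k U f \<Longrightarrow> Ck_on k U g \<Longrightarrow> Ck_on k U (\<lambda>x. pr (f x) (g x))"
proof (induction k arbitrary: f g)
  case 0 then show ?case using bounded_bilinear.continuous_on[OF assms(2), of U f g] by simp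
next
  case (Suc k)
  have d: "((\<lambda>x. pr (f x) (g x)) has_derivative (\<lambda>h. pr (f x) (frechet_derivative g (at x) h) + pr (frechet_derivative f (at x) h) (g x))) (at x)"
    if "x \<in> U" for x
    using bounded_bilinear.FDERIV[OF assms(2) Ck_on_diff[OF Suc.prems(1) that] Ck_on_diff[OF Suc.prems(2) that]] .
  show ?case
  proof (simp, intro conjI allI ballI)
    fix x assume "x \<in> U" then show "(\<lambda>x. pr (f x) (g x)) differentiable at x" using d differentiable_def by blast
  next
    fix v
    have "Ck_on k U (\<lambda>x. pr (f x) (frechet_derivative g (at x) v) + pr (frechet_derivative f (at x) v) (g x))"
    proof -
      have a: "Ck_on k U f" "Ck_on k U g" using Ck_on_mono Suc.prems by blast+
      have b: "Ck_on k U (\<lambda>x. frechet_derivative g (at x) v)" "Ck_on k U (\<lambda>x. frechet_derivative f (at x) v)"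
        using Suc.prems by auto
      show ?thesis by (rule Ck_on_add[OF assms(1) Suc.IH[OF a(1) b(1)] Suc.IH[OF b(2) a(2)]])
    qed
    note X = this show "Ck_on k U (\<lambda>x. frechet_derivative (\<lambda>x. pr (f x) (g x)) (at x) v)"
    proof (rule Ck_on_cong[OF assms(1) _ X])
      fix x assume "x \<in> U"
      show "pr (f x) (frechet_derivative g (at x) v) + pr (frechet_derivative f (at x) v) (g x) =
        frechet_derivative (\<lambda>x. pr (f x) (g x)) (at x) v"
        using fun_cong[OF frechet_derivative_at[OF d[OF \<open>x \<in> U\<close>]], of v] by simp
    qed
  qed
qed

lemma Ck_on_sum:
  fixes f :: "'i \<Rightarrow> 'a::real_normed_vector \<Rightarrow> 'b::real_normed_vector"
  assumes "open U" "finite S"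
  shows "(\<And>i. i \<in> S \<Longrightarrow> Ck_on k U (f i)) \<Longrightarrow> Ck_on k U (\<lambda>x. \<Sum>i\<in>S. f i x)"
  using assms(2)
  by (induction S rule: finite_induct) (auto intro!: Ck_on_add[OF assms(1)] simp: Ck_on_const)

lemma Ck_on_inverse:
  fixes g :: "'a::real_normed_vector \<Rightarrow> real"
  assumes "open U"
  shows "Ck_on k U g \<Longrightarrow> (\<And>x. x \<in> U \<Longrightarrow> g x \<noteq> 0) \<Longrightarrow> Ck_on k U (\<lambda>x. inverse (g x))"
proof (induction k arbitrary: g)
  case 0 then show ?case by (simp add: continuous_on_inverse)
next
  case (Suc k)
  have d: "((\<lambda>x. inverse (g x)) has_derivative (\<lambda>h. - (inverse (g x) * frechet_derivative g (at x) h * inverse (g x)))) (at x)"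
    if "x \<in> U" for x
    using Deriv.has_derivative_inverse[OF Suc.prems(2)[OF that] Ck_on_diff[OF Suc.prems(1) that]] .
  show ?case
  proof (simp only: Ck_on.simps, intro conjI allI ballI)
    fix x assume "x \<in> U" then show "(\<lambda>x. inverse (g x)) differentiable at x" using d differentiable_def by blast
  next
    fix v
    have i: "Ck_on k U (\<lambda>x. inverse (g x))" using Suc Ck_on_mono by blast
    have n: "Ck_on k U (\<lambda>x. (-1) * inverse (g x))"
      by (rule Ck_on_bilinear[OF assms bounded_bilinear_mult Ck_on_const i])
    have m: "Ck_on k U (\<lambda>x. frechet_derivative g (at x) v * inverse (g x))"
      using Suc.prems(1) by (intro Ck_on_bilinear[OF assms bounded_bilinear_mult _ i]) simp
    have "Ck_on k U (\<lambda>x. ((-1) * inverse (g x)) * (frechet_derivative g (at x) v * inverse (g x)))"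
      by (rule Ck_on_bilinear[OF assms bounded_bilinear_mult n m])
    note X = this show "Ck_on k U (\<lambda>x. frechet_derivative (\<lambda>x. inverse (g x)) (at x) v)"
    proof (rule Ck_on_cong[OF assms(1) _ X])
      fix x assume "x \<in> U"
      then show "-1 * inverse (g x) * (frechet_derivative g (at x) v * inverse (g x)) =
          frechet_derivative (\<lambda>x. inverse (g x)) (at x) v"
        using fun_cong[OF frechet_derivative_at[OF d[OF \<open>x \<in> U\<close>]], of v] by (simp add: algebra_simps)
    qed
  qed
qed

lemma linear_basis_expand:
  fixes L :: "'c::euclidean_space \<Rightarrow> 'b::real_vector"
  assumes "linear L"
  shows "L z = (\<Sum>b\<in>Basis. (z \<bullet> b) *\<^sub>R L b)"
proof -
  have "L z = L (\<Sum>b\<in>Basis. (z \<bullet> b) *\<^sub>R b)" by (simp add: euclidean_representation)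
  also have "\<dots> = (\<Sum>b\<in>Basis. (z \<bullet> b) *\<^sub>R L b)"
    by (simp add: linear_sum[OF assms] linear_scale[OF assms])
  finally show ?thesis .
qed

lemma Ck_on_compose:
  fixes f :: "'c::euclidean_space \<Rightarrow> 'b::real_normed_vector" and g :: "'a::real_normed_vector \<Rightarrow> 'c"
  assumes "open U" "open V"
  shows "Ck_on k V f \<Longrightarrow> Ck_on k U g \<Longrightarrow> g ` U \<subseteq> V \<Longrightarrow> Ck_on k U (\<lambda>x. f (g x))"
proof (induction k arbitrary: f g)
  case 0 then show ?case using continuous_on_compose2[of V f U g] by (simp only: Ck_on.simps)
next
  case (Suc k)
  have gx: "g x \<in> V" if "x \<in> U" for x using Suc.prems(3) that by auto
  have d: "((\<lambda>x. f (g x)) has_derivative (\<lambda>h. frechet_derivative f (at (g x)) (frechet_derivative g (at x) h))) (at x)"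
    if "x \<in> U" for x
    using has_derivative_compose[OF Ck_on_diff[OF Suc.prems(2) that] Ck_on_diff[OF Suc.prems(1) gx[OF that]]] .
  show ?case
  proof (simp only: Ck_on.simps, intro conjI allI ballI)
    fix x assume "x \<in> U" then show "(\<lambda>x. f (g x)) differentiable at x" using d differentiable_def by blast
  next
    fix v
    have gk: "Ck_on k U g" using Ck_on_mono Suc.prems(2) by blast
    have "Ck_on k U (\<lambda>x. \<Sum>b\<in>Basis. (frechet_derivative g (at x) v \<bullet> b) *\<^sub>R frechet_derivative f (at (g x)) b)"
    proof (rule Ck_on_sum[OF assms(1) finite_Basis])
      fix b :: 'c assume "b \<in> Basis"
      have 1: "Ck_on k U (\<lambda>x. frechet_derivative g (at x) v \<bullet> b)"
        using Suc.prems(2) by (intro Ck_on_bilinear[OF assms(1) bounded_bilinear_inner _ Ck_on_const]) simp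
      have 2: "Ck_on k U (\<lambda>x. frechet_derivative f (at (g x)) b)"
        using Suc.prems(1) by (intro Suc.IH[OF _ gk Suc.prems(3)]) (simp only: Ck_on.simps)
      show "Ck_on k U (\<lambda>x. (frechet_derivative g (at x) v \<bullet> b) *\<^sub>R frechet_derivative f (at (g x)) b)"
        by (rule Ck_on_bilinear[OF assms(1) bounded_bilinear_scaleR 1 2])
    qed
    note X = this
    show "Ck_on k U (\<lambda>x. frechet_derivative (\<lambda>x. f (g x)) (at x) v)"
    proof (rule Ck_on_cong[OF assms(1) _ X])
      fix x assume x: "x \<in> U"
      have lin: "linear (frechet_derivative f (at (g x)))"
        using Ck_on_diff[OF Suc.prems(1) gx[OF x]] has_derivative_linear by blast
      show "(\<Sum>b\<in>Basis. (frechet_derivative g (at x) v \<bullet> b) *\<^sub>R frechet_derivative f (at (g x)) b) =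
        frechet_derivative (\<lambda>x. f (g x)) (at x) v"
      proof -
        have e1: "frechet_derivative (\<lambda>x. f (g x)) (at x) v = frechet_derivative f (at (g x)) (frechet_derivative g (at x) v)"
          using fun_cong[OF frechet_derivative_at[OF d[OF x]], of v] by simp
        show ?thesis unfolding e1 by (rule linear_basis_expand[OF lin, symmetric])
      qed
    qed
  qed
qed

lemma Ck_on_norm: "Ck_on k (-{0}) (norm :: 'a::real_inner \<Rightarrow> real)"
proof (induction k)
  case 0 then show ?case by (simp add: continuous_on_norm_id)
next
  case (Suc k)
  have o: "open (-{0::'a})" by auto
  have d: "(norm has_derivative (\<lambda>h. h \<bullet> (inverse (norm x) *\<^sub>R x))) (at x)" if "x \<in> -{0}" for x :: 'a
    using has_derivative_norm[of x] that by (simp add: sgn_div_norm divide_inverse_commute scaleR_conv_of_real)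
  show ?case
  proof (simp only: Ck_on.simps, intro conjI allI ballI)
    fix x :: 'a assume "x \<in> -{0}" then show "norm differentiable at x" using d differentiable_def by blast
  next
    fix v :: 'a
    have i: "Ck_on k (-{0}) (\<lambda>x::'a. inverse (norm x))"
      by (rule Ck_on_inverse[OF o Suc.IH]) auto
    have "Ck_on k (-{0}) (\<lambda>x::'a. v \<bullet> (inverse (norm x) *\<^sub>R x))"
      by (intro Ck_on_bilinear[OF o bounded_bilinear_inner Ck_on_const]
          Ck_on_bilinear[OF o bounded_bilinear_scaleR i] Ck_on_linear bounded_linear_ident)
    note X = this
    show "Ck_on k (-{0}) (\<lambda>x. frechet_derivative norm (at x) v)"
    proof (rule Ck_on_cong[OF o _ X])
      fix x :: 'a assume x: "x \<in> -{0}"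
      show "v \<bullet> (inverse (norm x) *\<^sub>R x) = frechet_derivative norm (at x) v"
        using fun_cong[OF frechet_derivative_at[OF d[OF x]], of v] by (simp add: inner_commute)
    qed
  qed
qed





definition cofN :: "(real^3 \<Rightarrow> real^3) \<Rightarrow> real^3 \<Rightarrow> real^3" where
  "cofN A z = (z$1) *\<^sub>R (A (axis 2 1) \<times> A (axis 3 1)) + (z$2) *\<^sub>R (A (axis 3 1) \<times> A (axis 1 1))
             + (z$3) *\<^sub>R (A (axis 1 1) \<times> A (axis 2 1))"

lemma vec3_expand: "(t::real^3) = t$1 *\<^sub>R axis 1 1 + t$2 *\<^sub>R axis 2 1 + t$3 *\<^sub>R axis 3 1"
  by (simp add: vec_eq_iff forall_3 axis_def)

lemma lin3_expand: "linear A \<Longrightarrow> A (t::real^3) = t$1 *\<^sub>R A (axis 1 1) + t$2 *\<^sub>R A (axis 2 1) + t$3 *\<^sub>R A (axis 3 1)"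
proof -
  assume l: "linear A"
  have "A t = A (t$1 *\<^sub>R axis 1 1 + t$2 *\<^sub>R axis 2 1 + t$3 *\<^sub>R axis 3 1)"
    using vec3_expand[of t] by simp
  also have "\<dots> = t$1 *\<^sub>R A (axis 1 1) + t$2 *\<^sub>R A (axis 2 1) + t$3 *\<^sub>R A (axis 3 1)"
    by (simp add: linear_add[OF l] linear_scale[OF l])
  finally show ?thesis .
qed

lemma cross_dot_zero: "(x \<times> y) \<bullet> x = 0" "(x \<times> y) \<bullet> y = 0" for x y :: "real^3"
  using dot_cross_self by (auto simp: inner_commute)

lemma cyc: "(b \<times> c) \<bullet> a = a \<bullet> (b \<times> c)" "(c \<times> a) \<bullet> b = a \<bullet> (b \<times> c)" "(a \<times> b) \<bullet> c = a \<bullet> (b \<times> c)"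
  "b \<bullet> (c \<times> a) = a \<bullet> (b \<times> c)" "c \<bullet> (a \<times> b) = a \<bullet> (b \<times> c)"
  for a b c :: "real^3"
  by (simp_all add: cross3_simps)

lemma alg1_gen:
  fixes a1 a2 a3 u w :: "real^3"
  shows "(u$1 *\<^sub>R a1 + u$2 *\<^sub>R a2 + u$3 *\<^sub>R a3) \<times> (w$1 *\<^sub>R a1 + w$2 *\<^sub>R a2 + w$3 *\<^sub>R a3) =
    (u \<times> w)$1 *\<^sub>R (a2 \<times> a3) + (u \<times> w)$2 *\<^sub>R (a3 \<times> a1) + (u \<times> w)$3 *\<^sub>R (a1 \<times> a2)"
  using cross_skew[of a3 a2] cross_skew[of a1 a3] cross_skew[of a2 a1]
  by (simp add: cross_add_left cross_add_right cross_mult_left cross_mult_right cross_components algebra_simps)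

lemma alg2_gen:
  fixes a1 a2 a3 z t :: "real^3"
  shows "(z$1 *\<^sub>R (a2 \<times> a3) + z$2 *\<^sub>R (a3 \<times> a1) + z$3 *\<^sub>R (a1 \<times> a2)) \<bullet> (t$1 *\<^sub>R a1 + t$2 *\<^sub>R a2 + t$3 *\<^sub>R a3)
    = (z \<bullet> t) * (a1 \<bullet> (a2 \<times> a3))"
proof -
  have zt: "z \<bullet> t = z$1 * t$1 + z$2 * t$2 + z$3 * t$3" by (simp add: inner_vec_def sum_3)
  show ?thesis unfolding zt
    by (simp add: inner_add_left inner_add_right cross_dot_zero cyc algebra_simps)
qed

lemma alg1: "linear A \<Longrightarrow> A u \<times> A w = cofN A (u \<times> w)"
  unfolding lin3_expand[of A u] lin3_expand[of A w] cofN_def by (simp only: alg1_gen)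

lemma alg2: "linear A \<Longrightarrow> cofN A z \<bullet> A t = (z \<bullet> t) * (A (axis 1 1) \<bullet> (A (axis 2 1) \<times> A (axis 3 1)))"
  unfolding lin3_expand[of A t] cofN_def by (simp only: alg2_gen)

lemma det3_cross: "det3 a b c = (a \<times> b) \<bullet> c"
  by (simp add: det3_def cross3_simps)

lemma cross_triple: "(u::real^3) \<times> (p \<times> u) = (u \<bullet> u) *\<^sub>R p - (u \<bullet> p) *\<^sub>R u"
  by (simp add: cross3_simps forall_3)

lemma cross_nonzero_exists: "(p::real^3) \<noteq> 0 \<Longrightarrow> \<exists>a. p \<times> a \<noteq> 0"
proof (rule ccontr)
  assume "p \<noteq> 0" "\<not> (\<exists>a. p \<times> a \<noteq> 0)"
  then have "p \<times> axis 1 1 = 0" "p \<times> axis 2 1 = 0" by auto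
  then have "p = 0" by (simp add: cross3_simps axis_def forall_3)
  then show False using \<open>p \<noteq> 0\<close> by simp
qed





lemma S2_iff: "p \<in> S2 \<longleftrightarrow> norm p = 1"
  by (simp add: S2_def)

lemma TS2_iff: "v \<in> TS2 p \<longleftrightarrow> v \<bullet> p = 0"
  by (simp add: TS2_def)

lemma normalize_S2: "(x::real^3) \<noteq> 0 \<Longrightarrow> (1 / norm x) *\<^sub>R x \<in> S2"
  by (simp add: S2_iff)

lemma hext_S2: "p \<in> S2 \<Longrightarrow> hext F p = F p"
  by (simp add: hext_def S2_iff)

lemma Ck_on_minus:
  assumes "open U" "Ck_on k U f" "Ck_on k U g"
  shows "Ck_on k U (\<lambda>x. f x - g x)"
proof -
  have "Ck_on k U (\<lambda>x. f x + (-1) *\<^sub>R g x)"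
    by (intro Ck_on_add[OF assms(1) assms(2)] Ck_on_bilinear[OF assms(1) bounded_bilinear_scaleR Ck_on_const assms(3)])
  note X = this
  show ?thesis by (rule Ck_on_cong[OF assms(1) _ X]) simp
qed

lemma Ck_normalize: "Ck_on k (-{0}) (\<lambda>x::real^3. (1 / norm x) *\<^sub>R x)"
proof -
  have o: "open (-{0::real^3})" by auto
  have "Ck_on k (-{0}) (\<lambda>x::real^3. inverse (norm x) *\<^sub>R x)"
    by (intro Ck_on_bilinear[OF o bounded_bilinear_scaleR] Ck_on_inverse[OF o Ck_on_norm]
        Ck_on_linear bounded_linear_ident) auto
  note X = this
  show ?thesis by (rule Ck_on_cong[OF o _ X]) (simp add: divide_inverse)
qed

lemma smooth_S2_of:
  fixes F :: "real^3 \<Rightarrow> 'b::real_normed_vector"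
  assumes "\<And>k. Ck_on k (-{0}) F"
  shows "smooth_S2 F"
  unfolding smooth_S2_def Cinf_on_def hext_def
proof
  fix k
  have o: "open (-{0::real^3})" by auto
  show "Ck_on k (-{0}) (\<lambda>x. F ((1 / norm x) *\<^sub>R x))"
    by (rule Ck_on_compose[OF o o assms Ck_normalize]) auto
qed

lemma smooth_S2_diff:
  assumes "smooth_S2 F" "p \<in> S2"
  shows "(hext F has_derivative dS2 F p) (at p)"
proof -
  have "Ck_on (Suc 0) (-{0}) (hext F)" using assms(1) unfolding smooth_S2_def Cinf_on_def by blast
  moreover have "p \<in> -{0}" using assms(2) by (auto simp: S2_iff)
  ultimately show ?thesis unfolding dS2_def by (rule Ck_on_diff)
qed

lemma bb_cross: "bounded_bilinear cross3"
  using bilinear_cross bilinear_conv_bounded_bilinear by blast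

lemma frame:
  assumes "p \<in> S2"
  shows "\<exists>u w. u \<bullet> p = 0 \<and> w \<bullet> p = 0 \<and> u \<times> w = p \<and> u \<bullet> u = 1 \<and> u \<bullet> w = 0 \<and> w \<noteq> 0"
proof -
  have p0: "p \<noteq> 0" using assms by (auto simp: S2_iff)
  obtain a where a: "p \<times> a \<noteq> 0" using cross_nonzero_exists[OF p0] by blast
  define u where "u = (1 / norm (p \<times> a)) *\<^sub>R (p \<times> a)"
  define w where "w = p \<times> u"
  have up: "u \<bullet> p = 0" unfolding u_def using dot_cross_self(1)[of p a] by (simp add: inner_commute)
  have uu: "u \<bullet> u = 1" unfolding u_def using a by (simp add: power2_norm_eq_inner[symmetric] power2_eq_square)
  have wp: "w \<bullet> p = 0" unfolding w_def using dot_cross_self(1)[of p u] by (simp add: inner_commute)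
  have uw: "u \<bullet> w = 0" unfolding w_def using dot_cross_self(2)[of u p] by simp
  have cr: "u \<times> w = p" unfolding w_def cross_triple using uu up by (simp add: inner_commute)
  have "w \<noteq> 0" using cr p0 by auto
  then show ?thesis using up uu wp uw cr by blast
qed

lemma cs_strict:
  fixes H :: "'a::real_inner \<Rightarrow> 'a \<Rightarrow> real"
  assumes H: "bilinear H" "\<forall>u\<in>T. \<forall>v\<in>T. H u v = H v u" "\<forall>u\<in>T. u \<noteq> 0 \<longrightarrow> H u u > 0"
    and T: "\<And>a b c d. a \<in> T \<Longrightarrow> b \<in> T \<Longrightarrow> c *\<^sub>R a - d *\<^sub>R b \<in> T"
    and uw: "u \<in> T" "w \<in> T" "u \<bullet> u = (1::real)" "u \<bullet> w = 0" "w \<noteq> 0"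
  shows "H u u * H w w - (H u w)^2 > 0"
proof -
  have hw: "H w w > 0" using H(3) uw by blast
  define c where "c = H u w / H w w"
  define z where "z = u - c *\<^sub>R w"
  have zT: "z \<in> T" using T[OF uw(1) uw(2), of 1 c] unfolding z_def by simp
  have "z \<bullet> u = 1" unfolding z_def using uw by (simp add: inner_commute inner_diff_right)
  then have "z \<noteq> 0" by auto
  then have "H z z > 0" using H(3) zT by blast
  moreover have "H z z = H u u - 2 * c * H u w + c * c * H w w"
    unfolding z_def using H(2) uw(1,2)
    by (simp add: bilinear_lsub[OF H(1)] bilinear_rsub[OF H(1)] bilinear_lmul[OF H(1)] bilinear_rmul[OF H(1)] algebra_simps)
  moreover have "c * c * H w w = c * H u w" unfolding c_def using hw by (simp add: field_simps)
  ultimately have "H u u - c * H u w > 0" by simp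
  then have "(H u u - c * H u w) * H w w > 0" using hw by simp
  moreover have "(H u u - c * H u w) * H w w = H u u * H w w - (H u w)^2"
    unfolding c_def using hw by (simp add: field_simps power2_eq_square)
  ultimately show ?thesis by simp
qed





theorem lemma3p1:
  fixes f xi :: "real^3 \<Rightarrow> real^3"
  assumes "strictly_convex_embedding f"
    and "blaschke_normal f xi"
  shows "wave_front xi"
proof -
  have o: "open (-{0::real^3})" by auto
  have sf: "smooth_S2 f" using assms(1) by (simp add: strictly_convex_embedding_def)
  obtain nabla alpha h kk where
    sxi: "smooth_S2 xi" and
    trans: "\<forall>p\<in>S2. xi p \<notin> dS2 f p ` TS2 p" and
    tf: "torsion_free_connection nabla" and be: "bundle_endo alpha" and pd: "pos_def_sym_tensor h" and
    str: "\<And>X Y. vfield X \<Longrightarrow> vfield Y \<Longrightarrow> \<forall>p\<in>S2.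
             dS2 (\<lambda>q. dS2 f q (Y q)) p (X p) =
               dS2 f p (nabla X Y p) + h p (X p) (Y p) *\<^sub>R xi p" and
    wein: "\<And>X. vfield X \<Longrightarrow> \<forall>p\<in>S2. dS2 xi p (X p) = - dS2 f p (alpha p (X p))" and
    kk: "kk > 0" and
    vol: "\<forall>p\<in>S2. \<forall>u\<in>TS2 p. \<forall>v\<in>TS2 p.
             (det3 (dS2 f p u) (dS2 f p v) (xi p))\<^sup>2 = kk * (h p u u * h p v v - (h p u v)\<^sup>2)"
    using assms(2) unfolding blaschke_normal_def by blast
  define hf where "hf = hext f"
  have hfC: "\<And>k. Ck_on k (-{0}) hf" using sf unfolding smooth_S2_def Cinf_on_def hf_def by blast
  have hfd: "(hf has_derivative frechet_derivative hf (at y)) (at y)" if "y \<noteq> 0" for y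
    using Ck_on_diff[OF hfC[of "Suc 0"]] that by auto
  have lin: "linear (frechet_derivative hf (at y))" if "y \<noteq> 0" for y
    using has_derivative_linear[OF hfd[OF that]] .
  have DeC: "Ck_on k (-{0}) (\<lambda>y. frechet_derivative hf (at y) b)" for k b
    using hfC[of "Suc k"] by simp
  have dS2f: "dS2 f y v = frechet_derivative hf (at y) v" for y v
    by (simp add: dS2_def hf_def)
  define nu where "nu y = cofN (frechet_derivative hf (at y)) y" for y
  have nuC: "Ck_on k (-{0}) nu" for k
  proof -
    have c: "Ck_on k (-{0}) (\<lambda>y. frechet_derivative hf (at y) a \<times> frechet_derivative hf (at y) b)" for a b
      by (rule Ck_on_bilinear[OF o bb_cross DeC DeC])
    have l: "Ck_on k (-{0}) (\<lambda>y::real^3. y $ i)" for i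
      by (rule Ck_on_linear) (rule bounded_linear_vec_nth)
    have s: "Ck_on k (-{0}) (\<lambda>y. (y $ i) *\<^sub>R (frechet_derivative hf (at y) a \<times> frechet_derivative hf (at y) b))" for i a b
      by (rule Ck_on_bilinear[OF o bounded_bilinear_scaleR l c])
    show ?thesis unfolding nu_def cofN_def
      by (intro Ck_on_add[OF o] s)
  qed
  have snu: "smooth_S2 nu" by (rule smooth_S2_of[OF nuC])
  have T: "nu y \<bullet> dS2 f y t = 0" if "y \<in> S2" "t \<in> TS2 y" for y t
  proof -
    have "y \<noteq> 0" using that by (auto simp: S2_iff)
    then show ?thesis unfolding nu_def dS2f alg2[OF lin[OF \<open>y \<noteq> 0\<close>]]
      using that(2) by (simp add: TS2_iff inner_commute)
  qed
  have VF: "vfield (\<lambda>q. v - (v \<bullet> q) *\<^sub>R q)" for v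
  proof -
    have "Ck_on k (-{0}) (\<lambda>q. v - (v \<bullet> q) *\<^sub>R q)" for k
      by (intro Ck_on_minus[OF o] Ck_on_const Ck_on_bilinear[OF o bounded_bilinear_scaleR]
          Ck_on_bilinear[OF o bounded_bilinear_inner] Ck_on_linear bounded_linear_ident)
    then have "smooth_S2 (\<lambda>q. v - (v \<bullet> q) *\<^sub>R q)" by (rule smooth_S2_of)
    moreover have "(v - (v \<bullet> q) *\<^sub>R q) \<in> TS2 q" if "q \<in> S2" for q
    proof -
      have "q \<bullet> q = 1" using that by (simp add: S2_iff norm_eq_1)
      then show ?thesis by (simp add: TS2_iff inner_diff_left)
    qed
    ultimately show ?thesis unfolding vfield_def by blast
  qed
  have Vp: "(\<lambda>q. v - (v \<bullet> q) *\<^sub>R q) p = v" if "v \<in> TS2 p" for v p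
    using that by (simp add: TS2_iff)
  have NX: "nu p \<bullet> xi p \<noteq> 0" if p: "p \<in> S2" for p
  proof -
    obtain u w where uw: "u \<bullet> p = 0" "w \<bullet> p = 0" "u \<times> w = p" "u \<bullet> u = 1" "u \<bullet> w = 0" "w \<noteq> 0"
      using frame[OF p] by blast
    have p0: "p \<noteq> 0" using p by (auto simp: S2_iff)
    have uT: "u \<in> TS2 p" "w \<in> TS2 p" using uw by (auto simp: TS2_iff)
    have hp: "bilinear (h p)" "\<forall>u\<in>TS2 p. \<forall>v\<in>TS2 p. h p u v = h p v u" "\<forall>u\<in>TS2 p. u \<noteq> 0 \<longrightarrow> h p u u > 0"
      using pd p unfolding pos_def_sym_tensor_def by blast+
    have cl: "c *\<^sub>R a - d *\<^sub>R b \<in> TS2 p" if "a \<in> TS2 p" "b \<in> TS2 p" for a b c d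
      using that by (simp add: TS2_iff inner_diff_left)
    have "h p u u * h p w w - (h p u w)^2 > 0"
      by (rule cs_strict[OF hp cl uT uw(4,5,6)])
    then have "(det3 (dS2 f p u) (dS2 f p w) (xi p))\<^sup>2 > 0"
      using vol p uT kk by simp
    then have "det3 (dS2 f p u) (dS2 f p w) (xi p) \<noteq> 0" by auto
    moreover have "det3 (dS2 f p u) (dS2 f p w) (xi p) = nu p \<bullet> xi p"
      unfolding det3_cross dS2f nu_def alg1[OF lin[OF p0]] uw(3) ..
    ultimately show ?thesis by simp
  qed
  show ?thesis
    unfolding wave_front_def
  proof (intro exI conjI ballI)
    show "smooth_S2 nu" by (rule snu)
  next
    fix p assume "p \<in> S2" then show "nu p \<noteq> 0" using NX by force
  next
    fix p v assume p: "p \<in> S2" and v: "v \<in> TS2 p"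
    have a: "alpha p v \<in> TS2 p" using be p v unfolding bundle_endo_def by blast
    have "dS2 xi p v = - dS2 f p (alpha p v)"
      using wein[OF VF[of v]] p Vp[OF v] by force
    then show "nu p \<bullet> dS2 xi p v = 0" using T[OF p a] by simp
  next
    fix p v assume p: "p \<in> S2" and v: "v \<in> TS2 p"
    show "dS2 xi p v = 0 \<and> (\<exists>c. dS2 nu p v = c *\<^sub>R nu p) \<longrightarrow> v = 0"
    proof
      assume "dS2 xi p v = 0 \<and> (\<exists>c. dS2 nu p v = c *\<^sub>R nu p)"
      then obtain c where c: "dS2 nu p v = c *\<^sub>R nu p" by blast
      define V where "V = (\<lambda>q. v - (v \<bullet> q) *\<^sub>R q)"
      have VV: "vfield V" unfolding V_def by (rule VF)
      have Vpv: "V p = v" unfolding V_def by (rule Vp[OF v])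
      define G where "G q = dS2 f q (V q)" for q
      have GC: "Ck_on k (-{0}) G" for k
      proof -
        have VC: "Ck_on k (-{0}) V" for k
          unfolding V_def
          by (intro Ck_on_minus[OF o] Ck_on_const Ck_on_bilinear[OF o bounded_bilinear_scaleR]
              Ck_on_bilinear[OF o bounded_bilinear_inner] Ck_on_linear bounded_linear_ident)
        have "Ck_on k (-{0}) (\<lambda>y. \<Sum>b\<in>Basis. (V y \<bullet> b) *\<^sub>R frechet_derivative hf (at y) b)"
          by (intro Ck_on_sum[OF o finite_Basis] Ck_on_bilinear[OF o bounded_bilinear_scaleR]
              Ck_on_bilinear[OF o bounded_bilinear_inner VC Ck_on_const] DeC)
        note X = this
        show ?thesis
        proof (rule Ck_on_cong[OF o _ X])
          fix y :: "real^3" assume "y \<in> -{0}"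
          then show "(\<Sum>b\<in>Basis. (V y \<bullet> b) *\<^sub>R frechet_derivative hf (at y) b) = G y"
            unfolding G_def dS2f using linear_basis_expand[OF lin, of y "V y"] by simp
        qed
      qed
      have sG: "smooth_S2 G" by (rule smooth_S2_of[OF GC])
      have dnu: "(hext nu has_derivative dS2 nu p) (at p)" by (rule smooth_S2_diff[OF snu p])
      have dG: "(hext G has_derivative dS2 G p) (at p)" by (rule smooth_S2_diff[OF sG p])
      have d1: "((\<lambda>x. hext nu x \<bullet> hext G x) has_derivative
          (\<lambda>t. hext nu p \<bullet> dS2 G p t + dS2 nu p t \<bullet> hext G p)) (at p)"
        by (rule bounded_bilinear.FDERIV[OF bounded_bilinear_inner dnu dG])
      have zero: "hext nu x \<bullet> hext G x = 0" if "x \<in> -{0}" for x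
      proof -
        have y: "(1 / norm x) *\<^sub>R x \<in> S2" using that normalize_S2 by auto
        have "V ((1 / norm x) *\<^sub>R x) \<in> TS2 ((1 / norm x) *\<^sub>R x)"
          using VV y unfolding vfield_def by blast
        then show ?thesis unfolding hext_def G_def using T[OF y] by blast
      qed
      have p0: "p \<in> -{0}" using p by (auto simp: S2_iff)
      have d2: "((\<lambda>x. hext nu x \<bullet> hext G x) has_derivative (\<lambda>t. 0)) (at p)"
        by (rule has_derivative_transform_within_open[OF has_derivative_const o p0]) (simp add: zero)
      have eq: "(\<lambda>t. hext nu p \<bullet> dS2 G p t + dS2 nu p t \<bullet> hext G p) = (\<lambda>t. 0)"
        by (rule has_derivative_unique[OF d1 d2])
      then have e0: "nu p \<bullet> dS2 G p v + dS2 nu p v \<bullet> G p = 0"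
        using fun_cong[OF eq, of v] hext_S2[OF p, of nu] hext_S2[OF p, of G] by simp
      have "dS2 G p v = dS2 f p (nabla V V p) + h p v v *\<^sub>R xi p"
        using str[OF VV VV] p Vpv unfolding G_def by force
      moreover have "nabla V V p \<in> TS2 p"
        using tf VV p unfolding torsion_free_connection_def vfield_def by blast
      moreover have "dS2 nu p v \<bullet> G p = 0"
        unfolding c G_def Vpv using T[OF p v] by simp
      ultimately have "h p v v * (nu p \<bullet> xi p) = 0"
        using e0 T[OF p] by (simp add: inner_add_right)
      then have "h p v v = 0" using NX[OF p] by simp
      moreover have "\<forall>u\<in>TS2 p. u \<noteq> 0 \<longrightarrow> h p u u > 0"
        using pd p unfolding pos_def_sym_tensor_def by blast
      ultimately show "v = 0" using v by force
    qed
  qed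
qed


end
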